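(* Let $(N,C,\mathbf{A},k)$ be an instance with $|N|=n$ and let $\lambda\in[0,\frac{n}{k^2})$. Every committee output by $\lambda$-LS-PAV (from any initial committee) — i.e., every $W\subseteq C$ with $|W|=k$ such that there are no $c^+\in C\setminus W$, $c^-\in W$ with $\Delta(W,c^+,c^-)\ge\lambda$ — has EJR degree at least $\frac{n}{k(k+1)}-\lambda\frac{k}{k+1}$.
   Context: An instance consists of voters $N=\{1,\dots,n\}$, candidates $C$, approval ballots $A_i\subseteq C$ for $i\in N$, and a committee size $k$ with $1\le k\le|C|$. For $\ell\in\mathbb{N}$, $N'\subseteq N$ is an $\ell$-cohesive group if $|N'|\ge\ell n/k$ and $|\bigcap_{i\in N'}A_i|\ge\ell$. A size-$k$ committee $W$ achieves EJR degree $c$ if for every $\ell\in\{1,\dots,k\}$ every $\ell$-cohesive group contains at least $c$ voters $i$ with $|A_i\cap W|\ge\ell$. The PAV-score of $W$ is $s_{\mathrm{PAV}}(W)=\sum_{i=1}^n\sum_{j=1}^{|A_i\cap W|}\frac1j$, and $\Delta(W,c^+,c^-)=s_{\mathrm{PAV}}((W\setminus\{c^-\})\cup\{c^+\})-s_{\mathrm{PAV}}(W)$. The algorithm $\lambda$-LS-PAV starts from an arbitrary size-$k$ committee $W$ and, while there exist $c^+\notin W$ and $c^-\in W$ with $\Delta(W,c^+,c^-)\ge\lambda$, replaces $W$ by $(W\setminus\{c^-\})\cup\{c^+\}$; it then outputs $W$. *)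

theory Defs
  imports Complex_Main
begin

definition abc_instance :: "'v set \<Rightarrow> 'c set \<Rightarrow> ('v \<Rightarrow> 'c set) \<Rightarrow> nat \<Rightarrow> bool" where
  "abc_instance N C A k \<longleftrightarrow> finite N \<and> N \<noteq> {} \<and> finite C \<and> (\<forall>i\<in>N. A i \<subseteq> C)
     \<and> 1 \<le> k \<and> k \<le> card C"

definition cohesive :: "'v set \<Rightarrow> ('v \<Rightarrow> 'c set) \<Rightarrow> nat \<Rightarrow> nat \<Rightarrow> 'v set \<Rightarrow> bool" where
  "cohesive N A k l N' \<longleftrightarrow> N' \<subseteq> N \<and> real (card N') \<ge> real l * real (card N) / real k
     \<and> card (\<Inter>i\<in>N'. A i) \<ge> l"

definition ejr_degree :: "'v set \<Rightarrow> ('v \<Rightarrow> 'c set) \<Rightarrow> nat \<Rightarrow> 'c set \<Rightarrow> real \<Rightarrow> bool" where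
  "ejr_degree N A k W c \<longleftrightarrow> (\<forall>l\<in>{1..k}. \<forall>N'. cohesive N A k l N' \<longrightarrow>
      real (card {i\<in>N'. card (A i \<inter> W) \<ge> l}) \<ge> c)"

definition pav_score :: "'v set \<Rightarrow> ('v \<Rightarrow> 'c set) \<Rightarrow> 'c set \<Rightarrow> real" where
  "pav_score N A W = (\<Sum>i\<in>N. \<Sum>j=1..card (A i \<inter> W). 1 / real j)"

definition pav_delta :: "'v set \<Rightarrow> ('v \<Rightarrow> 'c set) \<Rightarrow> 'c set \<Rightarrow> 'c \<Rightarrow> 'c \<Rightarrow> real" where
  "pav_delta N A W cp cm = pav_score N A ((W - {cm}) \<union> {cp}) - pav_score N A W"

definition ls_pav_output :: "'v set \<Rightarrow> 'c set \<Rightarrow> ('v \<Rightarrow> 'c set) \<Rightarrow> nat \<Rightarrow> real \<Rightarrow> 'c set \<Rightarrow> bool" where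
  "ls_pav_output N C A k lam W \<longleftrightarrow> W \<subseteq> C \<and> card W = k \<and>
     \<not> (\<exists>cp\<in>C - W. \<exists>cm\<in>W. pav_delta N A W cp cm \<ge> lam)"

end

theory Submission
  imports Defs
begin

definition HH :: "nat \<Rightarrow> real" where "HH m = (\<Sum>j=1..m. 1 / real j)"

lemma HH_Suc: "HH (Suc m) = HH m + 1 / real (Suc m)"
  unfolding HH_def by simp

lemma card_swap:
  assumes "finite W" "cp \<notin> W" "cm \<in> W"
  shows "card (A \<inter> (W - {cm} \<union> {cp})) =
    (if cp \<in> A then (if cm \<in> A then card (A \<inter> W) else Suc (card (A \<inter> W)))
     else (if cm \<in> A then card (A \<inter> W) - 1 else card (A \<inter> W)))"
proof -
  have f: "finite (A \<inter> W)" using assms(1) by simp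
  have e1: "A \<inter> (W - {cm} \<union> {cp}) = (if cp \<in> A then insert cp (A \<inter> W - {cm}) else A \<inter> W - {cm})"
    by auto
  have c1: "card (A \<inter> W - {cm}) = (if cm \<in> A then card (A \<inter> W) - 1 else card (A \<inter> W))"
    using assms f by auto
  have "cp \<notin> A \<inter> W - {cm}" using assms by auto
  moreover have "cm \<in> A \<Longrightarrow> card (A \<inter> W) > 0" using f assms(3) card_gt_0_iff by blast
  ultimately show ?thesis unfolding e1 using c1 f assms
    by (auto simp: card_insert_if)
qed

lemma voter_sum:
  assumes "finite W" "cp \<notin> W"
  shows "(\<Sum>cm\<in>W. HH (card (A \<inter> (W - {cm} \<union> {cp}))) - HH (card (A \<inter> W)))
     \<ge> (if cp \<in> A then (real (card W) + 1) / (real (card (A \<inter> W)) + 1) else 0) - 1"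
proof -
  define a where "a = card (A \<inter> W)"
  define g where "g cm = HH (card (A \<inter> (W - {cm} \<union> {cp}))) - HH a" for cm
  have split: "sum g W = sum g (W \<inter> A) + sum g (W - A)"
    using assms(1) by (rule sum.Int_Diff)
  have cW: "card W = card (W \<inter> A) + card (W - A)"
    using assms(1) by (metis card_Int_Diff)
  have aeq: "card (W \<inter> A) = a" unfolding a_def by (simp add: Int_commute)
  show ?thesis
  proof (cases "cp \<in> A")
    case True
    have "sum g (W \<inter> A) = 0"
    proof (rule sum.neutral, rule ballI)
      fix x assume x: "x \<in> W \<inter> A"
      have "card (A \<inter> (W - {x} \<union> {cp})) = a"
        using card_swap[OF assms, of x A] x True by (simp add: a_def)
      then show "g x = 0" unfolding g_def by simp
    qed
    moreover have "sum g (W - A) = real (card (W - A)) * (1 / (real a + 1))"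
    proof -
      have "sum g (W - A) = sum (\<lambda>_. 1 / (real a + 1)) (W - A)"
      proof (rule sum.cong)
        fix x assume x: "x \<in> W - A"
        have "card (A \<inter> (W - {x} \<union> {cp})) = Suc a"
          using card_swap[OF assms, of x A] x True by (simp add: a_def)
        then show "g x = 1 / (real a + 1)" unfolding g_def by (simp add: HH_Suc)
      qed simp
      then show ?thesis by simp
    qed
    ultimately have "sum g W = real (card W - a) / (real a + 1)"
      using split cW aeq by simp
    moreover have "real (card W - a) = real (card W) - real a" using cW aeq by simp
    ultimately have "sum g W = ((real (card W) + 1) / (real a + 1)) - 1"
      by (simp add: field_simps)
    then show ?thesis using True unfolding g_def a_def by simp
  next
    case False
    have z: "sum g (W - A) = 0"
    proof (rule sum.neutral, rule ballI)
      fix x assume x: "x \<in> W - A"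
      have "card (A \<inter> (W - {x} \<union> {cp})) = a"
        using card_swap[OF assms, of x A] x False by (simp add: a_def)
      then show "g x = 0" unfolding g_def by simp
    qed
    have "sum g (W \<inter> A) \<ge> -1"
    proof (cases "a = 0")
      case True
      then have "W \<inter> A = {}" using aeq assms(1) by simp
      then show ?thesis by simp
    next
      case a0: False
      have "sum g (W \<inter> A) = sum (\<lambda>_. - (1 / real a)) (W \<inter> A)"
      proof (rule sum.cong)
        fix x assume x: "x \<in> W \<inter> A"
        have "card (A \<inter> (W - {x} \<union> {cp})) = a - 1"
          using card_swap[OF assms, of x A] x False by (simp add: a_def)
        moreover have "HH a = HH (a - 1) + 1 / real a"
          using a0 HH_Suc[of "a - 1"] by simp
        ultimately show "g x = - (1 / real a)" unfolding g_def by simp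
      qed simp
      also have "\<dots> = -1" using aeq a0 by simp
      finally show ?thesis by simp
    qed
    then show ?thesis using split z False unfolding g_def a_def by simp
  qed
qed


lemma pav_score_HH: "pav_score N A W = (\<Sum>i\<in>N. HH (card (A i \<inter> W)))"
  unfolding pav_score_def HH_def by simp

lemma final_arith:
  fixes n kk L m s G lam :: real
  assumes "kk \<ge> 1" "L \<ge> 1" "m \<ge> L * n / kk" "G \<ge> (m - s) / L"
    and "(kk + 1) * G - n < kk * lam" "s \<ge> 0"
  shows "s \<ge> n / (kk * (kk + 1)) - lam * kk / (kk + 1)"
proof -
  define B where "B = n / (kk * (kk + 1)) - lam * kk / (kk + 1)"
  have "(kk + 1) * ((m - s) / L) < n + kk * lam"
    using assms(4,5) mult_left_mono[OF assms(4), of "kk+1"] assms(1) by linarith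
  then have "(kk + 1) * (m - s) < L * (n + kk * lam)"
    using assms(2) by (simp add: field_simps)
  moreover have "(kk + 1) * m \<ge> (kk + 1) * (L * n / kk)"
    using assms(1,3) by (intro mult_left_mono) auto
  ultimately have "(kk + 1) * s > (kk + 1) * (L * n / kk) - L * (n + kk * lam)"
    by (simp add: algebra_simps)
  moreover have "(kk + 1) * (L * n / kk) - L * (n + kk * lam) = (kk + 1) * (L * B)"
  proof -
    have k0: "kk \<noteq> 0" "kk + 1 \<noteq> 0" using assms(1) by auto
    have "(kk + 1) * (n / (kk * (kk + 1))) = n / kk" using k0 by simp
    moreover have "(kk + 1) * (lam * kk / (kk + 1)) = lam * kk" using k0 by simp
    ultimately have "(kk + 1) * B = n / kk - lam * kk" unfolding B_def by (simp add: right_diff_distrib)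
    moreover have "(kk + 1) * (L * n / kk) - L * (n + kk * lam) = L * (n / kk - lam * kk)"
      using k0 by (simp add: field_simps)
    ultimately show ?thesis by simp
  qed
  ultimately have "s > L * B" using assms(1)
    by (metis mult_less_cancel_left_pos add_pos_pos less_le_trans zero_less_one)
  moreover have "L * B \<ge> B \<or> B < 0"
    using assms(2) by (cases "B \<ge> 0") (auto intro: mult_right_mono[of 1 L B, simplified])
  ultimately show ?thesis unfolding B_def[symmetric] using assms(6) by linarith
qed

theorem proposition3:
  fixes N :: "'v set" and C :: "'c set" and A :: "'v \<Rightarrow> 'c set" and k :: nat
    and lam :: real and W :: "'c set"
  assumes "abc_instance N C A k"
    and "0 \<le> lam" and "lam < real (card N) / (real k)^2"
    and "ls_pav_output N C A k lam W"
  shows "ejr_degree N A k W (real (card N) / (real k * (real k + 1)) - lam * real k / (real k + 1))"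
  unfolding ejr_degree_def
proof (intro ballI allI impI)
  fix l N' assume l: "l \<in> {1..k}" and coh: "cohesive N A k l N'"
  have finN: "finite N" and Nne: "N \<noteq> {}" and AC: "\<forall>i\<in>N. A i \<subseteq> C" and k1: "1 \<le> k"
    and finC: "finite C"
    using assms(1) unfolding abc_instance_def by auto
  have WC: "W \<subseteq> C" and cW: "card W = k" and noimp: "\<And>cp cm. cp \<in> C - W \<Longrightarrow> cm \<in> W \<Longrightarrow> pav_delta N A W cp cm < lam"
    using assms(4) unfolding ls_pav_output_def by (auto simp: not_le)
  have finW: "finite W" using WC finC finite_subset by blast
  have N'N: "N' \<subseteq> N" and N'big: "real (card N') \<ge> real l * real (card N) / real k"
    and T: "card (\<Inter>i\<in>N'. A i) \<ge> l"
    using coh unfolding cohesive_def by auto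
  have finN': "finite N'" using N'N finN finite_subset by blast
  have npos: "real (card N) > 0" using finN Nne by (simp add: card_gt_0_iff)
  have l1: "real l \<ge> 1" using l by simp
  have kpos: "real k \<ge> 1" using k1 by simp
  define S where "S = {i\<in>N'. card (A i \<inter> W) \<ge> l}"
  define B where "B = real (card N) / (real k * (real k + 1)) - lam * real k / (real k + 1)"
  have "real l * real (card N) / real k > 0" using npos l1 kpos by simp
  then have N'ne: "N' \<noteq> {}" using N'big by auto
  show "real (card S) \<ge> B" unfolding S_def[symmetric] B_def[symmetric]
  proof (cases "(\<Inter>i\<in>N'. A i) \<subseteq> W")
    case True
    have "S = N'"
    proof -
      have "card (A i \<inter> W) \<ge> l" if "i \<in> N'" for i
      proof -
        have "(\<Inter>i\<in>N'. A i) \<subseteq> A i \<inter> W" using True that by blast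
        then have "card (\<Inter>i\<in>N'. A i) \<le> card (A i \<inter> W)"
          using finW by (intro card_mono) auto
        then show ?thesis using T by simp
      qed
      then show ?thesis unfolding S_def by auto
    qed
    have "B \<le> real (card N) / (real k * (real k + 1))"
      unfolding B_def using assms(2) kpos by simp
    also have "\<dots> \<le> real (card N) / real k"
    proof (rule divide_left_mono)
      show "real k \<le> real k * (real k + 1)" using kpos by (simp add: algebra_simps)
      show "0 < real k * (real k + 1) * real k" using kpos by simp
      show "0 \<le> real (card N)" by simp
    qed
    also have "\<dots> \<le> real l * real (card N) / real k"
      using npos kpos l1 by (simp add: divide_right_mono)
    also have "\<dots> \<le> real (card S)" using N'big \<open>S = N'\<close> by simp
    finally show ?thesis .
  next
    case False
    then obtain cp where cpT: "cp \<in> (\<Inter>i\<in>N'. A i)" and cpW: "cp \<notin> W" by blast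
    obtain i0 where "i0 \<in> N'" using N'ne by blast
    then have cpC: "cp \<in> C" using cpT AC N'N by blast
    define a where "a i = card (A i \<inter> W)" for i
    define G where "G = (\<Sum>i\<in>N. if cp \<in> A i then 1 / (real (a i) + 1) else 0)"
    have delta: "pav_delta N A W cp cm = (\<Sum>i\<in>N. HH (card (A i \<inter> (W - {cm} \<union> {cp}))) - HH (card (A i \<inter> W)))" for cm
      unfolding pav_delta_def pav_score_HH by (simp add: sum_subtractf)
    have "(\<Sum>cm\<in>W. pav_delta N A W cp cm) < (\<Sum>cm\<in>W. lam)"
      using finW cW k1 noimp cpC cpW by (intro sum_strict_mono) auto
    then have up: "(\<Sum>cm\<in>W. pav_delta N A W cp cm) < real k * lam" using cW by simp
    have "(\<Sum>cm\<in>W. pav_delta N A W cp cm) = (\<Sum>i\<in>N. \<Sum>cm\<in>W. HH (card (A i \<inter> (W - {cm} \<union> {cp}))) - HH (card (A i \<inter> W)))"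
      unfolding delta by (rule sum.swap)
    also have "\<dots> \<ge> (\<Sum>i\<in>N. (if cp \<in> A i then (real (card W) + 1) / (real (card (A i \<inter> W)) + 1) else 0) - 1)"
      by (intro sum_mono voter_sum finW cpW)
    finally have "(\<Sum>i\<in>N. (if cp \<in> A i then (real k + 1) / (real (a i) + 1) else 0) - 1) < real k * lam"
      using up unfolding a_def cW by linarith
    moreover have "(\<Sum>i\<in>N. (if cp \<in> A i then (real k + 1) / (real (a i) + 1) else 0) - 1)
        = (real k + 1) * G - real (card N)"
    proof -
      have "(\<Sum>i\<in>N. (if cp \<in> A i then (real k + 1) / (real (a i) + 1) else 0) - 1)
          = (\<Sum>i\<in>N. (real k + 1) * (if cp \<in> A i then 1 / (real (a i) + 1) else 0)) - real (card N)"
        by (simp add: sum_subtractf, rule sum.cong, auto)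
      then show ?thesis unfolding G_def by (simp add: sum_distrib_left)
    qed
    ultimately have Gup: "(real k + 1) * G - real (card N) < real k * lam" by simp
    have "G \<ge> (\<Sum>i\<in>N'. if cp \<in> A i then 1 / (real (a i) + 1) else 0)"
      unfolding G_def using finN N'N by (intro sum_mono2) auto
    moreover have "(\<Sum>i\<in>N'. if cp \<in> A i then 1 / (real (a i) + 1) else 0) = (\<Sum>i\<in>N'. 1 / (real (a i) + 1))"
      using cpT by (intro sum.cong) auto
    moreover have "(\<Sum>i\<in>N'. 1 / (real (a i) + 1)) \<ge> (\<Sum>i\<in>N' - S. 1 / (real (a i) + 1))"
      using finN' by (intro sum_mono2) auto
    moreover have "(\<Sum>i\<in>N' - S. 1 / (real (a i) + 1)) \<ge> (\<Sum>i\<in>N' - S. 1 / real l)"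
    proof (rule sum_mono)
      fix i assume "i \<in> N' - S"
      then have "a i + 1 \<le> l" unfolding S_def a_def by auto
      then have "real (a i) + 1 \<le> real l" by linarith
      then show "1 / real l \<le> 1 / (real (a i) + 1)"
        by (intro divide_left_mono) auto
    qed
    moreover have "(\<Sum>i\<in>N' - S. 1 / real l) = (real (card N') - real (card S)) / real l"
    proof -
      have "S \<subseteq> N'" unfolding S_def by auto
      then have "card (N' - S) = card N' - card S" "card S \<le> card N'"
        using finN' by (auto simp: card_Diff_subset finite_subset card_mono)
      then show ?thesis by (simp add: of_nat_diff)
    qed
    ultimately have Glow: "G \<ge> (real (card N') - real (card S)) / real l" by linarith
    show ?thesis unfolding B_def
      by (rule final_arith[OF kpos l1 N'big Glow Gup]) simp
  qed
qed

end
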